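(* Let $\Sigma=(X,U,F)$ be a system and $Q\subset X$ be controlled invariant. Then \[h_{inv}(Q)\le\inf_{V}\log\rho(M_{Q,V}),\] where the infimum is over all finite $V\subset U$ that cover $Q$, and $\rho$ denotes the spectral radius.
   Context: A system is a triple $\Sigma=(X,U,F)$ where $X,U$ are nonempty sets and $F:X\times U\rightrightarrows X$ is a set-valued map with $F(x,u)\neq\emptyset$ for all $(x,u)$; for $A\subset X$, $F(A,u)=\bigcup_{x\in A}F(x,u)$. $Q\subset X$ is controlled invariant if for every $x\in Q$ there is $u\in U$ with $F(x,u)\subset Q$. For $u\in U$ put $Q_u=\{x\in Q:F(x,u)\subset Q\}$. Elements of $U^n$ are written $\omega=\omega_0\cdots\omega_{n-1}$, $\omega_{[0,i]}=\omega_0\cdots\omega_i$. A set $S\subset U^n$ is an admissible family of length $n$ for $Q$ if (a) $\omega'_0=\omega''_0$ for all $\omega',\omega''\in S$, and (b) there exists $x\in Q$ such that for every $\omega\in S$, with $I^0_\omega(x)=\{x\}$: for all $i=0,\dots,n-2$, $F(I^i_\omega(x),\omega_i)\subset\bigcup_{\omega'\in S,\ \omega'_{[0,i]}=\omega_{[0,i]}}Q_{\omega'_{i+1}}$ and $I^{i+1}_\omega(x):=F(I^i_\omega(x),\omega_i)\cap Q_{\omega_{i+1}}\neq\emptyset$; and $I^n_\omega(x):=F(I^{n-1}_\omega(x),\omega_{n-1})\subset Q$. Let $AF^n(Q)$ be the set of such families and $Q_S$ the set of $x\in Q$ satisfying (b). A set $\mathscr{S}\subset U^n$ is $(n,Q)$-spanning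 if $Q\subset\bigcup_{S\subset\mathscr{S},\,S\in AF^n(Q)}Q_S$; $r_{inv}(n,Q)$ is the infimum of $\sharp\mathscr{S}$ over such sets, and $h_{inv}(Q)=\limsup_{n\to\infty}\frac1n\log r_{inv}(n,Q)$ ($\log$ base $2$). A set $V\subset U$ is a cover of $Q$ if $Q\subset\bigcup_{a\in V}Q_a$. The admissible matrix $M_{Q,V}=(M_{ab})_{a,b\in V}$ has $M_{ab}=1$ if there exists $x\in Q_a$ with $F(x,a)\cap Q_b\neq\emptyset$, and $M_{ab}=0$ otherwise. The infimum of the empty set is $+\infty$. *)

theory Defs
  imports Complex_Main "HOL-Library.Extended_Real" "HOL-Library.Liminf_Limsup"
    "Jordan_Normal_Form.Spectral_Radius"
begin

text \<open>A system (X,U,F): state type 'x, input type 'u, set-valued map F.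
  Words in U^n are lists of length n.\<close>

definition Fimg :: "('x \<Rightarrow> 'u \<Rightarrow> 'x set) \<Rightarrow> 'x set \<Rightarrow> 'u \<Rightarrow> 'x set" where
  "Fimg F A u = (\<Union>x\<in>A. F x u)"

definition controlled_invariant :: "('x \<Rightarrow> 'u \<Rightarrow> 'x set) \<Rightarrow> 'x set \<Rightarrow> bool" where
  "controlled_invariant F Q \<longleftrightarrow> (\<forall>x\<in>Q. \<exists>u. F x u \<subseteq> Q)"

definition Qu :: "('x \<Rightarrow> 'u \<Rightarrow> 'x set) \<Rightarrow> 'x set \<Rightarrow> 'u \<Rightarrow> 'x set" where
  "Qu F Q u = {x\<in>Q. F x u \<subseteq> Q}"

fun Iset :: "('x \<Rightarrow> 'u \<Rightarrow> 'x set) \<Rightarrow> 'x set \<Rightarrow> 'u list \<Rightarrow> 'x \<Rightarrow> nat \<Rightarrow> 'x set" where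
  "Iset F Q w x 0 = {x}"
| "Iset F Q w x (Suc i) = Fimg F (Iset F Q w x i) (w ! i) \<inter> Qu F Q (w ! Suc i)"

definition adm_cond :: "('x \<Rightarrow> 'u \<Rightarrow> 'x set) \<Rightarrow> 'x set \<Rightarrow> nat \<Rightarrow> 'u list set \<Rightarrow> 'x \<Rightarrow> bool" where
  "adm_cond F Q n S x \<longleftrightarrow>
     (\<forall>w\<in>S.
        (\<forall>i. i + 2 \<le> n \<longrightarrow>
            Fimg F (Iset F Q w x i) (w ! i)
              \<subseteq> (\<Union>w'\<in>{w'\<in>S. take (Suc i) w' = take (Suc i) w}. Qu F Q (w' ! Suc i))
          \<and> Iset F Q w x (Suc i) \<noteq> {})
      \<and> Fimg F (Iset F Q w x (n - 1)) (w ! (n - 1)) \<subseteq> Q)"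

definition QS :: "('x \<Rightarrow> 'u \<Rightarrow> 'x set) \<Rightarrow> 'x set \<Rightarrow> nat \<Rightarrow> 'u list set \<Rightarrow> 'x set" where
  "QS F Q n S = {x\<in>Q. adm_cond F Q n S x}"

definition AF :: "('x \<Rightarrow> 'u \<Rightarrow> 'x set) \<Rightarrow> 'x set \<Rightarrow> nat \<Rightarrow> 'u list set set" where
  "AF F Q n = {S. 0 < n \<and> S \<noteq> {} \<and> (\<forall>w\<in>S. length w = n)
      \<and> (\<forall>w'\<in>S. \<forall>w''\<in>S. w' ! 0 = w'' ! 0)
      \<and> (\<exists>x\<in>Q. adm_cond F Q n S x)}"

definition spanning :: "('x \<Rightarrow> 'u \<Rightarrow> 'x set) \<Rightarrow> 'x set \<Rightarrow> nat \<Rightarrow> 'u list set \<Rightarrow> bool" where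
  "spanning F Q n SS \<longleftrightarrow> (\<forall>w\<in>SS. length w = n) \<and>
     Q \<subseteq> (\<Union>S\<in>{S. S \<subseteq> SS \<and> S \<in> AF F Q n}. QS F Q n S)"

definition ecard :: "'a set \<Rightarrow> ereal" where
  "ecard A = (if finite A then ereal (real (card A)) else \<infinity>)"

definition r_inv :: "('x \<Rightarrow> 'u \<Rightarrow> 'x set) \<Rightarrow> 'x set \<Rightarrow> nat \<Rightarrow> ereal" where
  "r_inv F Q n = (INF SS\<in>{SS. spanning F Q n SS}. ecard SS)"

definition elog2 :: "ereal \<Rightarrow> ereal" where
  "elog2 r = (if r = \<infinity> then \<infinity> else if r \<le> 0 then -\<infinity> else ereal (log 2 (real_of_ereal r)))"

definition h_inv :: "('x \<Rightarrow> 'u \<Rightarrow> 'x set) \<Rightarrow> 'x set \<Rightarrow> ereal" where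
  "h_inv F Q = limsup (\<lambda>n. elog2 (r_inv F Q n) / ereal (real n))"

definition is_cover :: "('x \<Rightarrow> 'u \<Rightarrow> 'x set) \<Rightarrow> 'x set \<Rightarrow> 'u set \<Rightarrow> bool" where
  "is_cover F Q V \<longleftrightarrow> Q \<subseteq> (\<Union>a\<in>V. Qu F Q a)"

definition adm_entry :: "('x \<Rightarrow> 'u \<Rightarrow> 'x set) \<Rightarrow> 'x set \<Rightarrow> 'u \<Rightarrow> 'u \<Rightarrow> complex" where
  "adm_entry F Q a b = (if \<exists>x\<in>Qu F Q a. F x a \<inter> Qu F Q b \<noteq> {} then 1 else 0)"

text \<open>M_{Q,V} as a (card V x card V) matrix, via an (arbitrary) enumeration of V;
  the spectral radius does not depend on the enumeration.\<close>
definition adm_matrix :: "('x \<Rightarrow> 'u \<Rightarrow> 'x set) \<Rightarrow> 'x set \<Rightarrow> 'u set \<Rightarrow> complex mat" where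
  "adm_matrix F Q V = (let e = (SOME e. bij_betw e {..<card V} V) in
     mat (card V) (card V) (\<lambda>(i, j). adm_entry F Q (e i) (e j)))"

end

theory Submission
  imports Defs
begin


lemma Iset_cong: "(\<forall>j\<le>i. w!j = w'!j) \<Longrightarrow> Iset F Q w x i = Iset F Q w' x i"
  by (induction i) auto

lemma Iset_sub: "w!0 = a \<Longrightarrow> x \<in> Qu F Q a \<Longrightarrow> Iset F Q w x i \<subseteq> Qu F Q (w!i)"
  by (induction i) auto

definition Sx where "Sx F Q V n x a = {w. length w = n \<and> set w \<subseteq> V \<and> w!0 = a \<and>
   (\<forall>i. Suc i < n \<longrightarrow> Iset F Q w x (Suc i) \<noteq> {})}"

lemma extend:
  assumes ne: "\<And>x u. F x u \<noteq> {}" and cov: "is_cover F Q V" and xa: "x \<in> Qu F Q a"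
  shows "length p + k = n \<Longrightarrow> p \<noteq> [] \<Longrightarrow> p!0 = a \<Longrightarrow> set p \<subseteq> V \<Longrightarrow>
    (\<forall>j. 0<j \<longrightarrow> j<length p \<longrightarrow> Iset F Q p x j \<noteq> {}) \<Longrightarrow>
    \<exists>w\<in>Sx F Q V n x a. \<forall>j<length p. w!j = p!j"
proof (induction k arbitrary: p)
  case 0
  then show ?case unfolding Sx_def by (intro bexI[of _ p]) auto
next
  case (Suc k)
  define m where "m = length p - 1"
  have lp: "length p = Suc m" using Suc.prems(2) m_def by auto
  have "Iset F Q p x m \<noteq> {}"
  proof (cases m)
    case 0 then show ?thesis by simp
  next
    case (Suc m') then show ?thesis using Suc.prems(5) lp by auto
  qed
  then obtain z where z: "z \<in> Iset F Q p x m" by auto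
  have zq: "z \<in> Qu F Q (p!m)" using Iset_sub[OF Suc.prems(3) xa] z by auto
  obtain y where y: "y \<in> F z (p!m)" using ne by blast
  have "y \<in> Q" using zq y unfolding Qu_def by auto
  then obtain b where b: "b \<in> V" "y \<in> Qu F Q b" using cov unfolding is_cover_def by auto
  define p' where "p' = p @ [b]"
  have agree: "\<forall>j<length p. p'!j = p!j" unfolding p'_def by (simp add: nth_append)
  have I1: "Iset F Q p' x j = Iset F Q p x j" if "j < length p" for j
    using agree that by (intro Iset_cong) auto
  have "\<exists>w\<in>Sx F Q V n x a. \<forall>j<length p'. w!j = p'!j"
  proof (rule Suc.IH)
    show "length p' + k = n" using Suc.prems(1) p'_def by simp
    show "p' \<noteq> []" using p'_def by simp
    show "p'!0 = a" using agree Suc.prems(3) lp by auto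
    show "set p' \<subseteq> V" using Suc.prems(4) b p'_def by auto
    show "\<forall>j. 0<j \<longrightarrow> j<length p' \<longrightarrow> Iset F Q p' x j \<noteq> {}"
    proof (intro allI impI)
      fix j assume j: "0 < j" "j < length p'"
      show "Iset F Q p' x j \<noteq> {}"
      proof (cases "j < length p")
        case True then show ?thesis using I1 Suc.prems(5) j by auto
      next
        case False
        then have jm: "j = Suc m" using j lp p'_def by auto
        have "p' ! Suc m = b" using lp p'_def by (simp add: nth_append)
        moreover have "p' ! m = p ! m" using agree lp by auto
        ultimately have "y \<in> Iset F Q p' x (Suc m)"
          using I1[of m] lp z y b by (auto simp: Fimg_def)
        then show ?thesis using jm by auto
      qed
    qed
  qed
  then obtain w where "w\<in>Sx F Q V n x a" "\<forall>j<length p'. w!j = p'!j" by blast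
  then show ?case using agree unfolding p'_def by (intro bexI[of _ w]) auto
qed

definition Eadj where "Eadj F Q a b = (\<exists>x\<in>Qu F Q a. F x a \<inter> Qu F Q b \<noteq> {})"
definition Pw where "Pw F Q V n = {w. length w = n \<and> set w \<subseteq> V \<and>
   (\<forall>i. Suc i < n \<longrightarrow> Eadj F Q (w!i) (w!Suc i))}"

lemma Sx_sub_Pw:
  assumes xa: "x \<in> Qu F Q a"
  shows "Sx F Q V n x a \<subseteq> Pw F Q V n"
proof
  fix w assume w: "w \<in> Sx F Q V n x a"
  have "Eadj F Q (w!i) (w!Suc i)" if i: "Suc i < n" for i
  proof -
    from w i obtain y where y: "y \<in> Iset F Q w x (Suc i)" unfolding Sx_def by blast
    then obtain z where z: "z \<in> Iset F Q w x i" "y \<in> F z (w!i)" "y \<in> Qu F Q (w!Suc i)"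
      by (auto simp: Fimg_def)
    have "z \<in> Qu F Q (w!i)" using Iset_sub[of w a x F Q i] w xa z unfolding Sx_def by auto
    then show ?thesis unfolding Eadj_def using z by blast
  qed
  then show "w \<in> Pw F Q V n" using w unfolding Sx_def Pw_def by auto
qed

lemma Sx_AF:
  assumes ne: "\<And>x u. F x u \<noteq> {}" and cov: "is_cover F Q V" and xa: "x \<in> Qu F Q a"
    and aV: "a \<in> V" and n: "0 < n"
  shows "Sx F Q V n x a \<in> AF F Q n" "adm_cond F Q n (Sx F Q V n x a) x"
proof -
  let ?S = "Sx F Q V n x a"
  have xQ: "x \<in> Q" using xa unfolding Qu_def by auto
  have "\<exists>w\<in>?S. \<forall>j<length [a]. w!j = [a]!j"
    by (rule extend[OF ne cov xa, of "[a]" "n - 1"]) (use n aV in auto)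
  then have Sne: "?S \<noteq> {}" by auto
  have adm: "adm_cond F Q n ?S x"
    unfolding adm_cond_def
  proof (intro ballI conjI allI impI)
    fix w assume w: "w \<in> ?S"
    have w0: "w!0 = a" and lw: "length w = n" and wV: "set w \<subseteq> V"
      and wI: "\<And>i. Suc i < n \<Longrightarrow> Iset F Q w x (Suc i) \<noteq> {}"
      using w unfolding Sx_def by auto
    show "Fimg F (Iset F Q w x (n - 1)) (w ! (n - 1)) \<subseteq> Q"
      using Iset_sub[OF w0 xa, of "n-1"] by (auto simp: Fimg_def Qu_def)
    fix i assume i: "i + 2 \<le> n"
    show "Iset F Q w x (Suc i) \<noteq> {}" using wI i by auto
    show "Fimg F (Iset F Q w x i) (w ! i)
        \<subseteq> (\<Union>w'\<in>{w' \<in> ?S. take (Suc i) w' = take (Suc i) w}. Qu F Q (w' ! Suc i))"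
    proof
      fix y assume "y \<in> Fimg F (Iset F Q w x i) (w ! i)"
      then obtain z where z: "z \<in> Iset F Q w x i" "y \<in> F z (w!i)" by (auto simp: Fimg_def)
      have "z \<in> Qu F Q (w!i)" using Iset_sub[OF w0 xa] z by auto
      then have "y \<in> Q" using z unfolding Qu_def by auto
      then obtain b where b: "b \<in> V" "y \<in> Qu F Q b" using cov unfolding is_cover_def by auto
      define p where "p = take (Suc i) w @ [b]"
      have lp: "length p = Suc (Suc i)" using lw i p_def by auto
      have pj: "p!j = w!j" if "j \<le> i" for j using that lw i unfolding p_def
        by (simp add: nth_append)
      have pS: "p ! Suc i = b" using lw i unfolding p_def by (simp add: nth_append)
      have Ip: "Iset F Q p x j = Iset F Q w x j" if "j \<le> i" for j
        using pj that by (intro Iset_cong) auto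
      have "\<exists>w'\<in>?S. \<forall>j<length p. w'!j = p!j"
      proof (rule extend[OF ne cov xa, of p "n - Suc (Suc i)"])
        show "length p + (n - Suc (Suc i)) = n" using lp i by auto
        show "p \<noteq> []" using lp by auto
        show "p!0 = a" using pj[of 0] w0 by auto
        show "set p \<subseteq> V" using wV b unfolding p_def by (auto dest: in_set_takeD)
        show "\<forall>j. 0 < j \<longrightarrow> j < length p \<longrightarrow> Iset F Q p x j \<noteq> {}"
        proof (intro allI impI)
          fix j assume j: "0 < j" "j < length p"
          show "Iset F Q p x j \<noteq> {}"
          proof (cases "j \<le> i")
            case True
            then obtain j' where "j = Suc j'" using j by (cases j) auto
            then show ?thesis using Ip[OF True] wI True i by auto
          next
            case False
            then have "j = Suc i" using j lp by auto
            moreover have "y \<in> Iset F Q p x (Suc i)"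
              using Ip[of i] pj[of i] pS z b by (auto simp: Fimg_def)
            ultimately show ?thesis by auto
          qed
        qed
      qed
      then obtain w' where w': "w' \<in> ?S" "\<forall>j<length p. w'!j = p!j" by blast
      have lw': "length w' = n" using w' unfolding Sx_def by auto
      have "take (Suc i) w' = take (Suc i) w"
        using w' lw' lw i lp pj by (intro nth_equalityI) auto
      moreover have "w' ! Suc i = b" using w' lp pS by auto
      ultimately show "y \<in> (\<Union>w'\<in>{w' \<in> ?S. take (Suc i) w' = take (Suc i) w}. Qu F Q (w' ! Suc i))"
        using w' b by blast
    qed
  qed
  show "adm_cond F Q n ?S x" by (rule adm)
  show "?S \<in> AF F Q n" unfolding AF_def using n Sne adm xQ by (auto simp: Sx_def)
qed



lemma rinv_le:
  assumes ne: "\<And>x u. F x u \<noteq> {}" and cov: "is_cover F Q V" and n: "0 < n"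
  shows "r_inv F Q n \<le> ecard (Pw F Q V n)"
proof -
  have "spanning F Q n (Pw F Q V n)"
    unfolding spanning_def
  proof (intro conjI subsetI)
    show "\<forall>w\<in>Pw F Q V n. length w = n" unfolding Pw_def by auto
    fix x assume x: "x \<in> Q"
    then obtain a where a: "a \<in> V" "x \<in> Qu F Q a" using cov unfolding is_cover_def by auto
    have "Sx F Q V n x a \<in> {S. S \<subseteq> Pw F Q V n \<and> S \<in> AF F Q n}"
      using Sx_sub_Pw[OF a(2)] Sx_AF[OF ne cov a(2) a(1) n] by auto
    moreover have "x \<in> QS F Q n (Sx F Q V n x a)"
      unfolding QS_def using x Sx_AF[OF ne cov a(2) a(1) n] by auto
    ultimately show "x \<in> (\<Union>S\<in>{S. S \<subseteq> Pw F Q V n \<and> S \<in> AF F Q n}. QS F Q n S)" by blast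
  qed
  then show ?thesis unfolding r_inv_def by (intro INF_lower) auto
qed

definition Wk where "Wk F Q V k a = {w\<in>Pw F Q V (Suc k). w!0 = a}"

lemma Wk_0: "Wk F Q V 0 a = (if a \<in> V then {[a]} else {})"
  unfolding Wk_def Pw_def by (auto simp: length_Suc_conv)

lemma Wk_Suc: "Wk F Q V (Suc k) a =
  (if a \<in> V then (#) a ` (\<Union>b\<in>{b\<in>V. Eadj F Q a b}. Wk F Q V k b) else {})"
proof (rule Set.set_eqI, rule iffI)
  fix w assume w: "w \<in> Wk F Q V (Suc k) a"
  then obtain w' where ww: "w = a # w'" unfolding Wk_def Pw_def by (auto simp: length_Suc_conv)
  have lw': "length w' = Suc k" using w ww unfolding Wk_def Pw_def by auto
  have E: "\<And>i. Suc i < Suc (Suc k) \<Longrightarrow> Eadj F Q (w!i) (w!Suc i)" and wV: "set w \<subseteq> V"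
    using w unfolding Wk_def Pw_def by auto
  have "Eadj F Q (w'!i) (w'!Suc i)" if "Suc i < Suc k" for i using E[of "Suc i"] that ww by auto
  moreover have "Eadj F Q a (w'!0)" using E[of 0] ww by auto
  moreover have "w'!0 \<in> V" using wV ww lw' by (cases w') auto
  ultimately show "w \<in> (if a \<in> V then (#) a ` (\<Union>b\<in>{b\<in>V. Eadj F Q a b}. Wk F Q V k b) else {})"
    using ww lw' wV unfolding Wk_def Pw_def by auto
next
  fix w assume w: "w \<in> (if a \<in> V then (#) a ` (\<Union>b\<in>{b\<in>V. Eadj F Q a b}. Wk F Q V k b) else {})"
  then obtain w' b where ww: "w = a # w'" and aV: "a \<in> V" and b: "b \<in> V" "Eadj F Q a b"
     and w': "w' \<in> Wk F Q V k b" by (auto split: if_splits)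
  have E: "\<And>i. Suc i < Suc k \<Longrightarrow> Eadj F Q (w'!i) (w'!Suc i)" and wV: "set w' \<subseteq> V"
    and lw': "length w' = Suc k" and w0: "w'!0 = b"
    using w' unfolding Wk_def Pw_def by auto
  have "Eadj F Q (w!i) (w!Suc i)" if "Suc i < Suc (Suc k)" for i
  proof (cases i)
    case 0 then show ?thesis using ww w0 b by auto
  next
    case (Suc j) then show ?thesis using E[of j] that ww by auto
  qed
  then show "w \<in> Wk F Q V (Suc k) a" using ww aV wV lw' unfolding Wk_def Pw_def by auto
qed

lemma Pw_UN: "Pw F Q V (Suc k) = (\<Union>a\<in>V. Wk F Q V k a)"
proof (rule Set.set_eqI, rule iffI)
  fix w assume w: "w \<in> Pw F Q V (Suc k)"
  then have "w!0 \<in> V" unfolding Pw_def by (auto intro!: nth_mem[THEN subsetD[rotated]])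
  then show "w \<in> (\<Union>a\<in>V. Wk F Q V k a)" using w unfolding Wk_def by blast
next
  fix w assume "w \<in> (\<Union>a\<in>V. Wk F Q V k a)"
  then show "w \<in> Pw F Q V (Suc k)" unfolding Wk_def by blast
qed

lemma Wk_finite: "finite V \<Longrightarrow> finite (Wk F Q V k a)"
  by (induction k arbitrary: a) (auto simp: Wk_0 Wk_Suc)

lemma card_Wk_Suc:
  assumes "finite V"
  shows "card (Wk F Q V (Suc k) a) =
    (if a \<in> V then (\<Sum>b\<in>V. if Eadj F Q a b then card (Wk F Q V k b) else 0) else 0)"
proof (cases "a \<in> V")
  case True
  have eq: "Wk F Q V (Suc k) a = (#) a ` (\<Union>b\<in>{b\<in>V. Eadj F Q a b}. Wk F Q V k b)"
    using True Wk_Suc[of F Q V k a] by simp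
  have "card (Wk F Q V (Suc k) a) = card (\<Union>b\<in>{b\<in>V. Eadj F Q a b}. Wk F Q V k b)"
    unfolding eq by (rule card_image) (auto intro: inj_onI)
  also have "\<dots> = (\<Sum>b\<in>{b\<in>V. Eadj F Q a b}. card (Wk F Q V k b))"
  proof (rule card_UN_disjoint)
    show "finite {b\<in>V. Eadj F Q a b}" using assms by auto
    show "\<forall>i\<in>{b\<in>V. Eadj F Q a b}. finite (Wk F Q V k i)" using Wk_finite[OF assms] by blast
    show "\<forall>i\<in>{b\<in>V. Eadj F Q a b}. \<forall>j\<in>{b\<in>V. Eadj F Q a b}. i \<noteq> j \<longrightarrow> Wk F Q V k i \<inter> Wk F Q V k j = {}"
      unfolding Wk_def by auto
  qed
  also have "\<dots> = (\<Sum>b\<in>V. if Eadj F Q a b then card (Wk F Q V k b) else 0)"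
    using assms by (simp add: sum.inter_filter)
  finally show ?thesis using True by simp
qed (simp add: Wk_Suc)

lemma card_Pw:
  assumes "finite V"
  shows "card (Pw F Q V (Suc k)) = (\<Sum>a\<in>V. card (Wk F Q V k a))"
proof -
  have "Pw F Q V (Suc k) = (\<Union>a\<in>V. Wk F Q V k a)" by (rule Pw_UN)
  moreover have "card (\<Union>a\<in>V. Wk F Q V k a) = (\<Sum>a\<in>V. card (Wk F Q V k a))"
  proof (rule card_UN_disjoint)
    show "finite V" by (rule assms)
    show "\<forall>i\<in>V. finite (Wk F Q V k i)" using Wk_finite[OF assms] by blast
    show "\<forall>i\<in>V. \<forall>j\<in>V. i \<noteq> j \<longrightarrow> Wk F Q V k i \<inter> Wk F Q V k j = {}"
      unfolding Wk_def by auto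
  qed
  ultimately show ?thesis by simp
qed

lemma Pw_finite: "finite V \<Longrightarrow> finite (Pw F Q V (Suc k))"
proof -
  assume "finite V"
  moreover have "Pw F Q V (Suc k) = (\<Union>a\<in>V. Wk F Q V k a)" by (rule Pw_UN)
  ultimately show ?thesis by (simp add: Wk_finite)
qed



lemma smult_mat_vec: "A \<in> carrier_mat n m \<Longrightarrow> v \<in> carrier_vec m \<Longrightarrow>
   (c \<cdot>\<^sub>m A) *\<^sub>v v = c \<cdot>\<^sub>v (A *\<^sub>v v)"
  by (intro eq_vecI) (auto simp: scalar_prod_def sum_distrib_left ac_simps)

lemma pow_mat_commute: "(A :: 'a::semiring_1 mat) \<in> carrier_mat n n \<Longrightarrow> A ^\<^sub>m k * A = A * A ^\<^sub>m k"
proof (induction k)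
  case 0 then show ?case by (simp add: left_mult_one_mat right_mult_one_mat)
next
  case (Suc k)
  have "A ^\<^sub>m Suc k * A = (A * A ^\<^sub>m k) * A" using Suc by simp
  also have "\<dots> = A * (A ^\<^sub>m k * A)" using Suc.prems by (intro assoc_mult_mat) auto
  finally show ?case by simp
qed

lemma sr_scaled_less_1:
  assumes A: "A \<in> carrier_mat N N" and N: "0 < N" and s: "spectral_radius A < s" "0 < s"
  shows "spectral_radius (complex_of_real (1/s) \<cdot>\<^sub>m A) < 1"
proof -
  let ?B = "(complex_of_real (1/s)) \<cdot>\<^sub>m A"
  have B: "?B \<in> carrier_mat N N" using A by auto
  from spectral_radius_mem_max(1)[OF B N] obtain \<mu> where
    mu: "\<mu> \<in> spectrum ?B" "spectral_radius ?B = norm \<mu>" by auto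
  from mu(1) obtain v where v: "eigenvector ?B v \<mu>" unfolding spectrum_def eigenvalue_def by auto
  have vc: "v \<in> carrier_vec N" and v0: "v \<noteq> 0\<^sub>v N" and Bv: "?B *\<^sub>v v = \<mu> \<cdot>\<^sub>v v"
    using v B unfolding eigenvector_def by auto
  have "A *\<^sub>v v = complex_of_real s \<cdot>\<^sub>v (?B *\<^sub>v v)"
    using smult_mat_vec[OF A vc] s by (simp add: smult_smult_assoc)
  also have "\<dots> = (complex_of_real s * \<mu>) \<cdot>\<^sub>v v" using Bv by (simp add: smult_smult_assoc)
  finally have "eigenvector A v (complex_of_real s * \<mu>)"
    using A vc v0 unfolding eigenvector_def by auto
  then have "norm (complex_of_real s * \<mu>) \<in> norm ` spectrum A"
    unfolding spectrum_def eigenvalue_def by auto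
  from spectral_radius_mem_max(2)[OF A N this] s
  have "s * norm \<mu> \<le> spectral_radius A" by (simp add: norm_mult)
  then have "s * norm \<mu> < s * 1" using s by linarith
  then have "norm \<mu> < 1" using s by (simp only: mult_less_cancel_left_pos)
  then show ?thesis using mu by simp
qed

lemma count_vec:
  fixes F :: "'x \<Rightarrow> 'u \<Rightarrow> 'x set" and Q :: "'x set" and c :: complex and e :: "nat \<Rightarrow> 'u"
  assumes V: "finite V" and e: "bij_betw e {..<card V} V"
  defines "M \<equiv> mat (card V) (card V) (\<lambda>(i,j). c * adm_entry F Q (e i) (e j))"
  shows "i < card V \<Longrightarrow> (M ^\<^sub>m k *\<^sub>v vec (card V) (\<lambda>_. 1)) $ i = c ^ k * of_nat (card (Wk F Q V k (e i)))"
proof (induction k arbitrary: i)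
  case 0
  have "e i \<in> V" using e 0 by (auto simp: bij_betw_def)
  then show ?case using 0 by (simp add: M_def Wk_0)
next
  case (Suc k)
  let ?N = "card V"
  have Mc: "M \<in> carrier_mat ?N ?N" unfolding M_def by auto
  have eV: "e i \<in> V" using e Suc.prems by (auto simp: bij_betw_def)
  have "M ^\<^sub>m Suc k *\<^sub>v vec ?N (\<lambda>_. 1) = M *\<^sub>v (M ^\<^sub>m k *\<^sub>v vec ?N (\<lambda>_. 1))"
  proof -
    have "M ^\<^sub>m Suc k = M * M ^\<^sub>m k" using pow_mat_commute[OF Mc, of k] by simp
    moreover have "vec ?N (\<lambda>_. 1) \<in> carrier_vec ?N" by simp
    ultimately show ?thesis using assoc_mult_mat_vec[OF Mc pow_carrier_mat[OF Mc, of k]] by simp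
  qed
  then have "(M ^\<^sub>m Suc k *\<^sub>v vec ?N (\<lambda>_. 1)) $ i = (\<Sum>j<?N. M $$ (i,j) * (M ^\<^sub>m k *\<^sub>v vec ?N (\<lambda>_. 1)) $ j)"
    using Suc.prems Mc by (simp add: scalar_prod_def lessThan_atLeast0)
  also have "\<dots> = (\<Sum>j<?N. c ^ Suc k * (if Eadj F Q (e i) (e j) then of_nat (card (Wk F Q V k (e j))) else 0))"
    using Suc.prems Suc.IH by (intro sum.cong) (auto simp: M_def adm_entry_def Eadj_def)
  also have "\<dots> = c ^ Suc k * (\<Sum>j<?N. (\<lambda>b. if Eadj F Q (e i) b then of_nat (card (Wk F Q V k b)) else 0) (e j))"
    by (simp add: sum_distrib_left)
  also have "\<dots> = c ^ Suc k * (\<Sum>b\<in>V. if Eadj F Q (e i) b then of_nat (card (Wk F Q V k b)) else 0)"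
    using sum.reindex_bij_betw[OF e, of "\<lambda>b. if Eadj F Q (e i) b then of_nat (card (Wk F Q V k b)) else (0::complex)"]
    by (simp only:)
  also have "\<dots> = c ^ Suc k * of_nat (card (Wk F Q V (Suc k) (e i)))"
    using card_Wk_Suc[OF V, of F Q k "e i"] eV by (auto simp: of_nat_sum intro!: sum.cong split: if_splits)
  finally show ?case .
qed



lemma limsup_le_const:
  assumes "\<forall>\<^sub>F n in sequentially. f n \<le> ereal t"
  shows "limsup f \<le> ereal t"
proof -
  have "limsup f \<le> limsup (\<lambda>n. ereal t)" by (rule Limsup_mono[OF assms])
  then show ?thesis by (simp add: Limsup_const)
qed

lemma limsup_bound:
  assumes K: "K > 0" and s: "s > 0" and r: "\<And>k. r (Suc k) \<le> ereal (K * s ^ k)"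
  shows "limsup (\<lambda>n. elog2 (r n) / ereal (real n)) \<le> ereal (log 2 s)"
proof -
  define g where "g n = (log 2 K - log 2 s) / real n + log 2 s" for n
  have ev: "\<forall>\<^sub>F n in sequentially. elog2 (r n) / ereal (real n) \<le> ereal (g n)"
  proof (rule eventually_sequentiallyI[of 1])
    fix n :: nat assume "1 \<le> n"
    then obtain k where n: "n = Suc k" by (cases n) auto
    have rb: "r n \<le> ereal (K * s ^ k)" using r n by simp
    show "elog2 (r n) / ereal (real n) \<le> ereal (g n)"
    proof (cases "r n \<le> 0")
      case True
      then show ?thesis unfolding elog2_def n by auto
    next
      case False
      then obtain t where t: "r n = ereal t" "0 < t" "t \<le> K * s ^ k"
        using rb by (cases "r n") auto
      have "log 2 t \<le> log 2 (K * s ^ k)" using t K s by simp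
      also have "\<dots> = log 2 K + real k * log 2 s" using K s by (simp add: log_mult log_nat_power)
      finally have le: "log 2 t \<le> log 2 K + real k * log 2 s" .
      have "log 2 t / real n \<le> (log 2 K + real k * log 2 s) / real n"
        using le n by (simp add: divide_right_mono)
      also have "\<dots> = g n" unfolding g_def n by (simp add: field_simps)
      finally show ?thesis using t unfolding elog2_def n by simp
    qed
  qed
  have "(\<lambda>n. (log 2 K - log 2 s) * (1 / real n) + log 2 s) \<longlonglongrightarrow> (log 2 K - log 2 s) * 0 + log 2 s"
    by (intro tendsto_intros lim_inverse_n')
  then have "g \<longlonglongrightarrow> log 2 s" unfolding g_def by simp
  then have gl: "(\<lambda>n. ereal (g n)) \<longlonglongrightarrow> ereal (log 2 s)" by (simp add: lim_ereal)
  have "limsup (\<lambda>n. elog2 (r n) / ereal (real n)) \<le> limsup (\<lambda>n. ereal (g n))"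
    by (rule Limsup_mono[OF ev])
  also have "\<dots> = ereal (log 2 s)" by (rule lim_imp_Limsup[OF _ gl]) simp
  finally show ?thesis .
qed



lemma bound_for_V:
  fixes F :: "'x \<Rightarrow> 'u \<Rightarrow> 'x set" and Q :: "'x set"
  assumes ne: "\<And>x u. F x u \<noteq> {}" and cov: "is_cover F Q V" and fin: "finite V"
    and Vne: "V \<noteq> {}" and s: "spectral_radius (adm_matrix F Q V) < s" "0 < s"
  shows "h_inv F Q \<le> ereal (log 2 s)"
proof -
  define N where "N = card V"
  have N: "0 < N" using fin Vne N_def by (simp add: card_gt_0_iff)
  define e where "e = (SOME e. bij_betw e {..<N} V)"
  have "\<exists>e. bij_betw e {..<N} V" using ex_bij_betw_nat_finite[OF fin] N_def
    by (simp add: atLeast0LessThan)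
  then have e: "bij_betw e {..<N} V" unfolding e_def by (rule someI_ex)
  define A where "A = adm_matrix F Q V"
  have Adef: "A = mat N N (\<lambda>(i,j). adm_entry F Q (e i) (e j))"
    unfolding A_def adm_matrix_def Let_def e_def N_def ..
  have Ac: "A \<in> carrier_mat N N" unfolding Adef by auto
  define c where "c = complex_of_real (1/s)"
  define M where "M = mat N N (\<lambda>(i,j). c * adm_entry F Q (e i) (e j))"
  have MA: "M = c \<cdot>\<^sub>m A" by (rule eq_matI) (auto simp: Adef M_def)
  have Mc: "M \<in> carrier_mat N N" unfolding M_def by auto
  have "spectral_radius M < 1" using sr_scaled_less_1[OF Ac N] s A_def MA c_def by simp
  from spectral_radius_jnf_norm_bound_less_1_upper_triangular[OF Mc this]
  obtain C where C: "\<And>k. norm_bound (M ^\<^sub>m k) C" by blast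
  have Cb: "norm ((M ^\<^sub>m k) $$ (i,j)) \<le> C" if "i < N" "j < N" for k i j
    using C[of k] that Mc unfolding norm_bound_def by auto
  have C0: "0 \<le> C" using Cb[of 0 0 0] N by (meson norm_ge_zero order_trans)
  have card_le: "real (card (Wk F Q V k (e i))) \<le> s ^ k * (N * C)" if i: "i < N" for k i
  proof -
    have cv: "(M ^\<^sub>m k *\<^sub>v vec N (\<lambda>_. 1)) $ i = c ^ k * of_nat (card (Wk F Q V k (e i)))"
      using count_vec[OF fin e[unfolded N_def], where c=c and F=F and Q=Q and k=k] i unfolding M_def N_def by simp
    have "(M ^\<^sub>m k *\<^sub>v vec N (\<lambda>_. 1)) $ i = (\<Sum>j<N. (M ^\<^sub>m k) $$ (i,j))"
      using i Mc by (simp add: scalar_prod_def lessThan_atLeast0)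
    then have "norm ((M ^\<^sub>m k *\<^sub>v vec N (\<lambda>_. 1)) $ i) \<le> (\<Sum>j<N. norm ((M ^\<^sub>m k) $$ (i,j)))"
      by (simp add: norm_sum)
    also have "\<dots> \<le> (\<Sum>j<N. C)" using Cb i by (intro sum_mono) auto
    also have "\<dots> = N * C" by simp
    finally have nb: "norm (c ^ k * of_nat (card (Wk F Q V k (e i)))) \<le> N * C" using cv by simp
    have nc: "norm c = 1/s" using s unfolding c_def by (simp only: norm_of_real) simp
    have "(1/s) ^ k * real (card (Wk F Q V k (e i))) \<le> N * C"
      using nb nc by (simp only: norm_mult norm_power norm_of_nat)
    then have "s ^ k * ((1/s) ^ k * real (card (Wk F Q V k (e i)))) \<le> s ^ k * (N * C)"
      using s by (intro mult_left_mono) auto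
    then show ?thesis using s by (simp add: power_one_over field_simps)
  qed
  have Pw_le: "real (card (Pw F Q V (Suc k))) \<le> N * N * C * s ^ k" for k
  proof -
    have "card (Pw F Q V (Suc k)) = (\<Sum>a\<in>V. card (Wk F Q V k a))" by (rule card_Pw[OF fin])
    also have "\<dots> = (\<Sum>i<N. card (Wk F Q V k (e i)))" using sum.reindex_bij_betw[OF e, of "\<lambda>a. card (Wk F Q V k a)"] by simp
    finally have "real (card (Pw F Q V (Suc k))) = (\<Sum>i<N. real (card (Wk F Q V k (e i))))" by simp
    also have "\<dots> \<le> (\<Sum>i<N. s ^ k * (N * C))" using card_le by (intro sum_mono) auto
    also have "\<dots> = N * N * C * s ^ k" by simp
    finally show ?thesis .
  qed
  have rb: "r_inv F Q (Suc k) \<le> ereal ((N * N * C + 1) * s ^ k)" for k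
  proof -
    have "r_inv F Q (Suc k) \<le> ecard (Pw F Q V (Suc k))" by (rule rinv_le[OF ne cov]) simp
    also have "\<dots> = ereal (real (card (Pw F Q V (Suc k))))"
      unfolding ecard_def using Pw_finite[OF fin] by simp
    also have "\<dots> \<le> ereal ((N * N * C + 1) * s ^ k)"
    proof -
      have "0 \<le> s ^ k" using s by simp
      then show ?thesis using Pw_le[of k] by (simp add: distrib_right)
    qed
    finally show ?thesis .
  qed
  have "0 < real (N * N) * C + 1" using C0 by (simp add: add_nonneg_pos)
  from limsup_bound[OF this s(2) rb] show ?thesis unfolding h_inv_def .
qed

lemma sr_nonneg:
  assumes "finite V" "V \<noteq> {}"
  shows "0 \<le> spectral_radius (adm_matrix F Q V)"
proof -
  have c: "adm_matrix F Q V \<in> carrier_mat (card V) (card V)"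
    unfolding adm_matrix_def Let_def by auto
  have "0 < card V" using assms by (simp add: card_gt_0_iff)
  from spectral_radius_mem_max(1)[OF c this] show ?thesis by auto
qed

theorem corollary3p9:
  fixes F :: "'x \<Rightarrow> 'u \<Rightarrow> 'x set" and Q :: "'x set"
  assumes "\<And>x u. F x u \<noteq> {}"
    and "controlled_invariant F Q"
  shows "h_inv F Q \<le>
    (INF V\<in>{V. finite V \<and> is_cover F Q V}. elog2 (ereal (spectral_radius (adm_matrix F Q V))))"
proof (cases "Q = {}")
  case True
  have r0: "r_inv F Q n \<le> 0" for n
  proof -
    have "spanning F Q n {}" unfolding spanning_def using True by auto
    then have "r_inv F Q n \<le> ecard ({} :: 'u list set)" unfolding r_inv_def by (intro INF_lower) auto
    then show ?thesis by (simp add: ecard_def zero_ereal_def)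
  qed
  have "h_inv F Q \<le> ereal t" for t
    unfolding h_inv_def
  proof (rule limsup_le_const, rule eventually_sequentiallyI[of 1])
    fix n :: nat assume "1 \<le> n"
    then obtain k where n: "n = Suc k" by (cases n) auto
    have "elog2 (r_inv F Q n) = -\<infinity>" using r0[of n] unfolding elog2_def by auto
    then show "elog2 (r_inv F Q n) / ereal (real n) \<le> ereal t" using n by simp
  qed
  then have "h_inv F Q = -\<infinity>" by (rule ereal_bot)
  then show ?thesis by simp
next
  case False
  show ?thesis
  proof (rule INF_greatest)
    fix V assume V: "V \<in> {V. finite V \<and> is_cover F Q V}"
    then have fin: "finite V" and cov: "is_cover F Q V" by auto
    have Vne: "V \<noteq> {}" using cov False unfolding is_cover_def by auto
    define \<rho> where "\<rho> = spectral_radius (adm_matrix F Q V)"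
    have r0: "0 \<le> \<rho>" unfolding \<rho>_def by (rule sr_nonneg[OF fin Vne])
    have hb: "h_inv F Q \<le> ereal (log 2 s)" if "\<rho> < s" "0 < s" for s
      using bound_for_V[OF assms(1) cov fin Vne, of s] that unfolding \<rho>_def by simp
    show "h_inv F Q \<le> elog2 (ereal (spectral_radius (adm_matrix F Q V)))"
    proof (cases "\<rho> = 0")
      case True
      have "h_inv F Q \<le> ereal t" for t
        using hb[of "2 powr t"] True by simp
      then have "h_inv F Q = -\<infinity>" by (rule ereal_bot)
      then show ?thesis by simp
    next
      case False
      then have rp: "0 < \<rho>" using r0 by simp
      have "elog2 (ereal \<rho>) = ereal (log 2 \<rho>)" using rp unfolding elog2_def by simp
      moreover have "h_inv F Q \<le> ereal (log 2 \<rho>)"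
      proof (rule ereal_le_epsilon2)
        fix \<epsilon> :: real assume eps: "0 < \<epsilon>"
        have "1 < (2::real) powr \<epsilon>" using eps by simp
        then have "\<rho> < \<rho> * 2 powr \<epsilon>" using rp by simp
        then have "h_inv F Q \<le> ereal (log 2 (\<rho> * 2 powr \<epsilon>))" using hb rp by simp
        also have "log 2 (\<rho> * 2 powr \<epsilon>) = log 2 \<rho> + \<epsilon>" using rp by (simp add: log_mult)
        finally show "h_inv F Q \<le> ereal (log 2 \<rho>) + ereal \<epsilon>" by simp
      qed
      ultimately show ?thesis unfolding \<rho>_def by simp
    qed
  qed
qed

end
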